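(* Let $x^{(0)}\in\mathbb R^n$, $h_0:=H(x^{(0)})$, let $\epsilon>0$ be small, and let $t_\epsilon$ be the unique solution of $f(t_\epsilon)=\epsilon$, where $f(t)=\frac1{h_0}\tanh(\frac{h_0t}2)$ if $h_0\ne0$ and $f(t)=t/2$ if $h_0=0$. Let $x(t)$ be the solution of $\dot x_i=x_i\big(\sum_{j>i}a_jx_j-\sum_{j<i}a_jx_j\big)$ with $x(0)=x^{(0)}$. Then $x(t_\epsilon)=\mathcal K(x^{(0)})$. Consequently, since $t_\epsilon$ depends on $x^{(0)}$ only through $H(x^{(0)})$ (which is preserved by $\mathcal K$), the $m$-th iterate satisfies $\mathcal K^m(x^{(0)})=x(mt_\epsilon)$ for all $m\ge0$, and every first integral of the continuous system is invariant under $\mathcal K$.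
   Context: $(a_1,\dots,a_n)\in\mathbb R^n\setminus\{0\}$, $H=a_1x_1+\dots+a_nx_n$, $v_0:=0$, $v_i:=a_1x_1+\dots+a_ix_i$. $\mathcal K$ is the Kahan map with step size $2\epsilon$: $\tilde x_i=x_i\dfrac{(1-\epsilon H)(1+\epsilon H)}{(1-\epsilon H+2\epsilon v_{i-1})(1-\epsilon H+2\epsilon v_i)}$, $i=1,\dots,n$ (points where denominators vanish or the solution ceases to exist are excluded). *)

theory Defs
  imports "HOL-Analysis.Analysis"
begin

text \<open>Coordinates are indexed by a finite linearly ordered type 'n (so n = CARD('n));
  the order on 'n plays the role of the order on the indices 1..n.\<close>

definition Ham :: "real^('n::{finite,linorder}) \<Rightarrow> real^('n::{finite,linorder}) \<Rightarrow> real" where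
  "Ham a x = (\<Sum>j\<in>UNIV. a$j * x$j)"

definition vle :: "real^('n::{finite,linorder}) \<Rightarrow> real^('n::{finite,linorder}) \<Rightarrow> 'n \<Rightarrow> real" where
  "vle a x i = (\<Sum>j\<in>{j. j \<le> i}. a$j * x$j)"

definition vlt :: "real^('n::{finite,linorder}) \<Rightarrow> real^('n::{finite,linorder}) \<Rightarrow> 'n \<Rightarrow> real" where
  "vlt a x i = (\<Sum>j\<in>{j. j < i}. a$j * x$j)"

text \<open>Kahan map with step size 2 eps.\<close>
definition kahan :: "real^('n::{finite,linorder}) \<Rightarrow> real \<Rightarrow> real^('n::{finite,linorder}) \<Rightarrow> real^('n::{finite,linorder})" where
  "kahan a eps x = (\<chi> i. x$i * ((1 - eps * Ham a x) * (1 + eps * Ham a x)) /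
      ((1 - eps * Ham a x + 2 * eps * vlt a x i) * (1 - eps * Ham a x + 2 * eps * vle a x i)))"

definition kahan_defined :: "real^('n::{finite,linorder}) \<Rightarrow> real \<Rightarrow> real^('n::{finite,linorder}) \<Rightarrow> bool" where
  "kahan_defined a eps x = (\<forall>i. 1 - eps * Ham a x + 2 * eps * vlt a x i \<noteq> 0 \<and>
                                 1 - eps * Ham a x + 2 * eps * vle a x i \<noteq> 0)"

definition field :: "real^('n::{finite,linorder}) \<Rightarrow> real^('n::{finite,linorder}) \<Rightarrow> real^('n::{finite,linorder})" where
  "field a x = (\<chi> i. x$i * ((\<Sum>j\<in>{j. i < j}. a$j * x$j) - (\<Sum>j\<in>{j. j < i}. a$j * x$j)))"

definition is_solution :: "real^('n::{finite,linorder}) \<Rightarrow> (real \<Rightarrow> real^('n::{finite,linorder})) \<Rightarrow> real \<Rightarrow> bool" where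
  "is_solution a x T = (\<forall>t\<in>{0..T}. (x has_vector_derivative field a (x t)) (at t within {0..T}))"

definition first_integral :: "real^('n::{finite,linorder}) \<Rightarrow> (real^('n::{finite,linorder}) \<Rightarrow> 'b) \<Rightarrow> bool" where
  "first_integral a I = (\<forall>x T. 0 \<le> T \<longrightarrow> is_solution a x T \<longrightarrow> I (x T) = I (x 0))"

definition ffun :: "real \<Rightarrow> real \<Rightarrow> real" where
  "ffun h t = (if h \<noteq> 0 then tanh (h * t / 2) / h else t / 2)"

end

theory Submission imports Defs begin

definition V :: "real^('n::{finite,linorder}) \<Rightarrow> ('n::{finite,linorder}) set \<Rightarrow> real^('n::{finite,linorder}) \<Rightarrow> real" where
  "V a S y = (\<Sum>j\<in>S. a$j * y$j)"

definition downset :: "('n::{finite,linorder}) set \<Rightarrow> bool" where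
  "downset S = (\<forall>j k. j \<in> S \<longrightarrow> k < j \<longrightarrow> k \<in> S)"

lemma sum_ident:
  fixes p :: "'n::{finite,linorder} \<Rightarrow> real"
  assumes "downset S"
  shows "(\<Sum>j\<in>S. p j * ((\<Sum>k\<in>{k. j<k}. p k) - (\<Sum>k\<in>{k. k<j}. p k))) = sum p S * sum p (-S)"
proof -
  have split: "(\<Sum>k\<in>{k. j<k}. p k) = sum p (-S) + (\<Sum>k\<in>{k\<in>S. j<k}. p k)" if "j \<in> S" for j
  proof -
    have "{k. j<k} = (-S) \<union> {k\<in>S. j<k}" using assms that unfolding downset_def
      by (auto simp: not_less) (metis linorder_neqE)
    moreover have "(-S) \<inter> {k\<in>S. j<k} = {}" by auto
    ultimately show ?thesis by (simp add: sum.union_disjoint)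
  qed
  have lt: "{k. k<j} = {k\<in>S. k<j}" if "j \<in> S" for j
    using assms that unfolding downset_def by auto
  have sw: "(\<Sum>j\<in>S. \<Sum>k\<in>{k\<in>S. j<k}. p j * p k) = (\<Sum>j\<in>S. \<Sum>k\<in>{k\<in>S. k<j}. p j * p k)"
    by (subst sum.swap_restrict) (auto simp: mult.commute)
  have "(\<Sum>j\<in>S. p j * ((\<Sum>k\<in>{k. j<k}. p k) - (\<Sum>k\<in>{k. k<j}. p k)))
      = (\<Sum>j\<in>S. p j * sum p (-S) + (\<Sum>k\<in>{k\<in>S. j<k}. p j * p k) - (\<Sum>k\<in>{k\<in>S. k<j}. p j * p k))"
    by (rule sum.cong) (auto simp: split lt algebra_simps sum_distrib_left)
  also have "\<dots> = sum p S * sum p (-S)"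
    by (simp add: sum.distrib sum_subtractf sw sum_distrib_right)
  finally show ?thesis .
qed

lemma comp_deriv:
  assumes "(x has_vector_derivative x') F"
  shows "((\<lambda>t. x t $ i) has_real_derivative x' $ i) F"
  using bounded_linear.has_vector_derivative[OF bounded_linear_vec_nth assms]
  by (simp add: has_real_derivative_iff_has_vector_derivative)

lemma V_deriv:
  fixes a :: "real^('n::{finite,linorder})"
  assumes "is_solution a x T" "t \<in> {0..T}" "downset S"
  shows "((\<lambda>t. V a S (x t)) has_real_derivative V a S (x t) * V a (-S) (x t)) (at t within {0..T})"
proof -
  have xd: "(x has_vector_derivative field a (x t)) (at t within {0..T})"
    using assms unfolding is_solution_def by auto
  have "((\<lambda>t. V a S (x t)) has_real_derivative (\<Sum>j\<in>S. a$j * field a (x t) $ j)) (at t within {0..T})"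
    unfolding V_def by (intro DERIV_sum DERIV_cmult comp_deriv[OF xd])
  moreover have "(\<Sum>j\<in>S. a$j * field a (x t) $ j) = V a S (x t) * V a (-S) (x t)"
    using sum_ident[OF assms(3), of "\<lambda>j. a$j * x t $ j"]
    by (simp add: field_def V_def mult.assoc)
  ultimately show ?thesis by simp
qed

lemma Ham_V: "Ham a y = V a S y + V a (-S) y"
  unfolding Ham_def V_def by (metis add.commute finite sum.subset_diff top_greatest Compl_eq_Diff_UNIV)

lemma deriv_zero_const:
  fixes f :: "real \<Rightarrow> real"
  assumes "\<And>s. s\<in>{0..T} \<Longrightarrow> (f has_real_derivative 0) (at s within {0..T})" "t\<in>{0..T}"
  shows "f t = f 0"
proof -
  have "\<exists>s\<in>{0..t}. f t - f 0 = (*) 0 (t - 0)"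
  proof (rule mvt_very_simple)
    show "0 \<le> t" using assms(2) by auto
    fix s :: real assume s: "0\<le>s" "s\<le>t"
    then have "(f has_derivative (*) 0) (at s within {0..T})"
      using assms(1)[of s] assms(2) by (auto simp: has_field_derivative_def)
    then show "(f has_derivative (*) 0) (at s within {0..t})"
      by (rule has_derivative_subset) (use assms(2) in auto)
  qed
  then show ?thesis by auto
qed

lemma lin_zero:
  fixes \<phi> c :: "real \<Rightarrow> real"
  assumes d: "\<And>s. s\<in>{0..T} \<Longrightarrow> (\<phi> has_real_derivative c s * \<phi> s) (at s within {0..T})"
    and cc: "continuous_on {0..T} c" and z: "\<phi> 0 = 0" and t: "t\<in>{0..T}"
  shows "\<phi> t = 0"
proof -
  obtain K where K: "\<And>s. s\<in>{0..T} \<Longrightarrow> norm (c s) \<le> K"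
    using compact_imp_bounded[OF compact_continuous_image[OF cc compact_Icc]] unfolding bounded_iff by fastforce
  define g where "g s = (\<phi> s)^2 * exp (-(2*K) * s)" for s
  define D where "D s = 2 * (\<phi> s)^2 * (c s - K) * exp (-(2*K) * s)" for s
  have gd: "(g has_real_derivative D s) (at s within {0..T})" if "s\<in>{0..T}" for s
    using d[OF that] unfolding g_def D_def
    by (auto intro!: derivative_eq_intros simp: power2_eq_square algebra_simps)
  have "\<exists>s\<in>{0..t}. g t - g 0 = (*) (D s) (t - 0)"
  proof (rule mvt_very_simple)
    show "0 \<le> t" using t by auto
    fix s :: real assume s: "0\<le>s" "s\<le>t"
    then have "(g has_derivative (*) (D s)) (at s within {0..T})"
      using gd[of s] t by (auto simp: has_field_derivative_def)
    then show "(g has_derivative (*) (D s)) (at s within {0..t})"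
      by (rule has_derivative_subset) (use t in auto)
  qed
  then obtain s where s: "s\<in>{0..t}" "g t - g 0 = D s * t" by auto
  have "c s \<le> K" using K[of s] s t by auto
  then have "D s \<le> 0" unfolding D_def
    by (intro mult_nonpos_nonneg mult_nonneg_nonpos) auto
  then have "D s * t \<le> 0" using t by (simp add: mult_nonpos_nonneg)
  moreover have "g 0 = 0" using z by (simp add: g_def)
  ultimately have "g t \<le> 0" using s by simp
  then have "(\<phi> t)^2 \<le> 0" unfolding g_def by (simp add: mult_le_0_iff)
  then show ?thesis by simp
qed

lemma Ham_const:
  assumes "is_solution a x T" "t \<in> {0..T}"
  shows "Ham a (x t) = Ham a (x 0)"
proof -
  have "Ham a y = V a UNIV y" for y unfolding Ham_def V_def by simp
  moreover have "((\<lambda>t. V a UNIV (x t)) has_real_derivative 0) (at s within {0..T})" if "s\<in>{0..T}" for s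
    using V_deriv[OF assms(1) that, of UNIV] by (simp add: downset_def V_def)
  ultimately show ?thesis using deriv_zero_const[OF _ assms(2)] by metis
qed

definition E :: "real \<Rightarrow> real \<Rightarrow> real" where
  "E h t = (if h = 0 then t else (exp (h * t) - 1) / h)"

lemma E_deriv: "(E h has_real_derivative exp (h * t)) (at t within S)"
proof (cases "h = 0")
  case True
  then show ?thesis unfolding E_def[abs_def] by (auto intro!: derivative_eq_intros)
next
  case False
  have "((\<lambda>t. (exp (h * t) - 1) / h) has_real_derivative exp (h * t)) (at t within S)"
    using False by (auto intro!: derivative_eq_intros)
  then show ?thesis using False unfolding E_def[abs_def] by simp
qed

lemma E_0[simp]: "E h 0 = 0" by (simp add: E_def)

lemma logistic:
  assumes sol: "is_solution a x T" and ds: "downset S" and t: "t\<in>{0..T}"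
  shows "V a S (x t) * (1 + V a S (x 0) * E (Ham a (x 0)) t) = V a S (x 0) * exp (Ham a (x 0) * t)"
proof -
  define h where "h = Ham a (x 0)"
  define v0 where "v0 = V a S (x 0)"
  define v where "v s = V a S (x s)" for s
  have vd: "(v has_real_derivative v s * (h - v s)) (at s within {0..T})" if "s\<in>{0..T}" for s
  proof -
    have "V a (-S) (x s) = h - v s"
      using Ham_V[of a "x s" S] Ham_const[OF sol that] by (simp add: h_def v_def)
    then show ?thesis using V_deriv[OF sol that ds] unfolding v_def[abs_def] by simp
  qed
  define \<phi> where "\<phi> s = v s * (1 + v0 * E h s) - v0 * exp (h * s)" for s
  have "\<phi> t = 0"
  proof (rule lin_zero[where c="\<lambda>s. h - v s" and T=T and \<phi>=\<phi> and t=t])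
    show "(\<phi> has_real_derivative (h - v s) * \<phi> s) (at s within {0..T})" if "s\<in>{0..T}" for s
    proof -
      have "((\<lambda>s. v s * (1 + v0 * E h s) - v0 * exp (h * s)) has_real_derivative (h - v s) * \<phi> s) (at s within {0..T})"
        unfolding \<phi>_def
        by (rule derivative_eq_intros vd[OF that] E_deriv[of h s] refl)+ (simp add: algebra_simps)
      then show ?thesis by (simp add: \<phi>_def[abs_def])
    qed
    have "continuous (at s within {0..T}) v" if "s\<in>{0..T}" for s
      using vd[OF that] by (rule DERIV_continuous)
    then have "continuous_on {0..T} v" by (simp add: continuous_on_eq_continuous_within)
    then show "continuous_on {0..T} (\<lambda>s. h - v s)" by (intro continuous_intros)
    show "\<phi> 0 = 0" by (simp add: \<phi>_def v_def v0_def)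
  qed (use t in auto)
  then show ?thesis by (simp add: \<phi>_def v_def v0_def h_def)
qed

lemma downset_le: "downset {j. j \<le> i}" unfolding downset_def by auto
lemma downset_lt: "downset {j. j < i}" unfolding downset_def by auto

lemma closed_form:
  assumes sol: "is_solution a x T" and t: "t\<in>{0..T}"
  shows "x t $ i * (1 + V a {j. j \<le> i} (x 0) * E (Ham a (x 0)) t) * (1 + V a {j. j < i} (x 0) * E (Ham a (x 0)) t)
         = x 0 $ i * exp (Ham a (x 0) * t)"
proof -
  define h where "h = Ham a (x 0)"
  define p where "p = V a {j. j \<le> i} (x 0)"
  define q where "q = V a {j. j < i} (x 0)"
  define dle where "dle s = 1 + p * E h s" for s
  define dlt where "dlt s = 1 + q * E h s" for s
  define \<psi> where "\<psi> s = x s $ i * dle s * dlt s * exp (-(h * s))" for s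
  have "(\<psi> has_real_derivative 0) (at s within {0..T})" if s: "s\<in>{0..T}" for s
  proof -
    have xd: "(x has_vector_derivative field a (x s)) (at s within {0..T})"
      using sol s unfolding is_solution_def by auto
    define xi' where "xi' = field a (x s) $ i"
    have "((\<lambda>s. x s $ i * (1 + p * E h s) * (1 + q * E h s) * exp (-(h * s))) has_real_derivative
        xi' * dle s * dlt s * exp (-(h * s)) + x s $ i * (p * exp (h * s)) * dlt s * exp (-(h * s))
        + x s $ i * dle s * (q * exp (h * s)) * exp (-(h * s)) - x s $ i * dle s * dlt s * exp (-(h * s)) * h)
        (at s within {0..T})"
      unfolding dle_def dlt_def xi'_def
      by (rule derivative_eq_intros comp_deriv[OF xd] E_deriv[of h s] refl)+ (simp add: algebra_simps)
    moreover
    have L1: "V a {j. j \<le> i} (x s) * dle s = p * exp (h * s)"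
      using logistic[OF sol downset_le s, of i] by (simp add: dle_def p_def h_def)
    have L2: "V a {j. j < i} (x s) * dlt s = q * exp (h * s)"
      using logistic[OF sol downset_lt s, of i] by (simp add: dlt_def q_def h_def)
    have "- {j. j \<le> i} = {j. i < j}" by (auto simp: not_le)
    then have H: "h = V a {j. j \<le> i} (x s) + V a {j. i < j} (x s)"
      using Ham_V[of a "x s" "{j. j \<le> i}"] Ham_const[OF sol s] by (simp add: h_def)
    have F: "xi' = x s $ i * (V a {j. i < j} (x s) - V a {j. j < i} (x s))"
      by (simp add: xi'_def field_def V_def)
    have Z: "xi' * dle s * dlt s * e + x s $ i * (p * exp (h * s)) * dlt s * e
        + x s $ i * dle s * (q * exp (h * s)) * e - x s $ i * dle s * dlt s * e * h = 0" for e
      apply (unfold F L1[symmetric] L2[symmetric])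
      apply (unfold H)
      by (simp add: algebra_simps)
    have "xi' * dle s * dlt s * exp (-(h * s)) + x s $ i * (p * exp (h * s)) * dlt s * exp (-(h * s))
        + x s $ i * dle s * (q * exp (h * s)) * exp (-(h * s)) - x s $ i * dle s * dlt s * exp (-(h * s)) * h = 0"
      by (rule Z)
    ultimately show ?thesis by (simp add: \<psi>_def[abs_def] dle_def dlt_def)
  qed
  then have "\<psi> t = \<psi> 0" using deriv_zero_const t by blast
  then have "x t $ i * dle t * dlt t * exp (-(h * t)) = x 0 $ i"
    by (simp add: \<psi>_def dle_def dlt_def)
  then have "x t $ i * dle t * dlt t * exp (-(h * t)) * exp (h * t) = x 0 $ i * exp (h * t)" by simp
  then show ?thesis by (simp add: dle_def dlt_def p_def q_def h_def mult.assoc exp_minus_inverse flip: exp_add)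
qed

lemma ffun_facts:
  assumes e: "eps > 0" and f: "ffun h T = eps"
  shows "T > 0 \<and> 1 - h*eps > 0 \<and> 2*eps = (1 - h*eps) * E h T \<and> 1 + h*eps = (1 - h*eps) * exp (h * T)"
proof (cases "h = 0")
  case True
  then show ?thesis using f e by (simp add: ffun_def E_def)
next
  case False
  define w where "w = exp (h * T / 2)"
  have w: "w > 0" by (simp add: w_def)
  have q: "exp (h * T) = w * w" unfolding w_def by (simp flip: exp_add)
  have "tanh (h * T / 2) = (w - inverse w) / (w + inverse w)"
    unfolding tanh_altdef w_def by (simp add: exp_minus)
  also have "\<dots> = (w*w - 1) / (w*w + 1)"
  proof -
    have i1: "w - inverse w = (w*w-1)/w" using w by (simp add: field_simps)
    have i2: "w + inverse w = (w*w+1)/w" using w by (simp add: field_simps)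
    show ?thesis unfolding i1 i2 using w by simp
  qed
  finally have th: "tanh (h * T / 2) = (w*w - 1) / (w*w + 1)" .
  have "eps = tanh (h*T/2) / h" using f False by (simp add: ffun_def)
  then have "h * eps = tanh (h*T/2)" using False by simp
  then have he: "h * eps = (w*w - 1) / (w*w + 1)" using th by simp
  have pos: "w*w + 1 > 0" using w by (simp add: add_pos_pos)
  have A: "1 - h*eps = 2 / (w*w+1)" unfolding he using pos by (simp add: field_simps)
  have B: "1 + h*eps = (1 - h*eps) * exp (h*T)" unfolding A q he using pos by (simp add: field_simps)
  have epsv: "eps = (w*w-1)/(h*(w*w+1))"
  proof -
    have "eps = (h*eps)/h" using False by simp
    then show ?thesis unfolding he by simp
  qed
  have "(1 - h*eps) * E h T = 2/(w*w+1) * ((w*w-1)/h)" unfolding A E_def q using False by simp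
  also have "\<dots> = 2*eps" unfolding epsv by simp
  finally have C: "2*eps = (1 - h*eps) * E h T" by simp
  have wq: "w*w - 1 = (h*eps)*(w*w+1)" using he pos by (simp add: field_simps)
  have T: "T > 0"
  proof (cases "h > 0")
    case True
    then have "h * eps > 0" using e by simp
    then have "(h*eps)*(w*w+1) > 0" using pos by (rule mult_pos_pos)
    then have "w*w > 1" using wq by linarith
    then have "exp (h*T) > 1" using q by simp
    then have "h*T > 0" by simp
    then show ?thesis using True by (simp add: zero_less_mult_iff)
  next
    case hn: False
    then have "h < 0" using False by simp
    then have "h * eps < 0" using e by (simp add: mult_neg_pos)
    then have "(h*eps)*(w*w+1) < 0" using pos by (rule mult_neg_pos)
    then have "w*w < 1" using wq by linarith
    then have "exp (h*T) < 1" using q by simp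
    then have "h*T < 0" by simp
    then show ?thesis using \<open>h < 0\<close> by (simp add: mult_less_0_iff)
  qed
  show ?thesis using T A B C pos by simp
qed

lemma part1:
  assumes e: "eps > 0" and f: "ffun (Ham a x0) T = eps" and sol: "is_solution a x T"
    and x0: "x 0 = x0" and kd: "kahan_defined a eps x0"
  shows "x T = kahan a eps x0"
proof -
  define h where "h = Ham a x0"
  have ff: "T > 0" "1 - h*eps > 0" "2*eps = (1 - h*eps) * E h T" "1 + h*eps = (1 - h*eps) * exp (h * T)"
    using ffun_facts[OF e f] by (auto simp: h_def)
  show ?thesis
  proof (rule vec_eq_iff[THEN iffD2], rule allI)
    fix i
    define p where "p = vle a x0 i"
    define q where "q = vlt a x0 i"
    define r where "r = 1 - h*eps"
    have cf: "x T $ i * (1 + p * E h T) * (1 + q * E h T) = x0 $ i * exp (h * T)"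
      using closed_form[OF sol, of T i] ff(1) unfolding x0 p_def q_def h_def vle_def vlt_def V_def by simp
    have N1: "1 - eps * h + 2 * eps * q = r * (1 + q * E h T)"
    proof -
      have "r * (1 + q * E h T) = r + q * (r * E h T)" by (simp add: algebra_simps)
      also have "\<dots> = r + q * (2*eps)" using ff(3) r_def by simp
      finally show ?thesis by (simp add: r_def algebra_simps)
    qed
    have N2: "1 - eps * h + 2 * eps * p = r * (1 + p * E h T)"
    proof -
      have "r * (1 + p * E h T) = r + p * (r * E h T)" by (simp add: algebra_simps)
      also have "\<dots> = r + p * (2*eps)" using ff(3) r_def by simp
      finally show ?thesis by (simp add: r_def algebra_simps)
    qed
    have nz: "1 - eps * h + 2 * eps * q \<noteq> 0" "1 - eps * h + 2 * eps * p \<noteq> 0"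
      using kd unfolding kahan_defined_def p_def q_def h_def by auto
    have r: "r > 0" using ff(2) r_def by simp
    have d1: "1 + q * E h T \<noteq> 0" and d2: "1 + p * E h T \<noteq> 0" using nz N1 N2 by auto
    have "kahan a eps x0 $ i = x0 $ i * ((1 - eps * h) * (1 + eps * h)) /
        ((1 - eps * h + 2 * eps * q) * (1 - eps * h + 2 * eps * p))"
      unfolding kahan_def h_def p_def q_def by simp
    also have "\<dots> = x0 $ i * (r * (r * exp (h*T))) / ((r * (1 + q * E h T)) * (r * (1 + p * E h T)))"
      unfolding N1 N2 using ff(4) by (simp add: r_def mult.commute)
    also have "\<dots> = ((r*r) * (x0 $ i * exp (h*T))) / ((r*r) * ((1 + q * E h T) * (1 + p * E h T)))"
      by (simp add: ac_simps)
    also have "\<dots> = x0 $ i * exp (h*T) / ((1 + q * E h T) * (1 + p * E h T))"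
      using r by (intro mult_divide_mult_cancel_left) simp
    also have "\<dots> = x T $ i"
    proof -
      have "x0 $ i * exp (h*T) = x T $ i * ((1 + q * E h T) * (1 + p * E h T))"
        using cf by (simp add: ac_simps)
      then show ?thesis using d1 d2 by simp
    qed
    finally show "x T $ i = kahan a eps x0 $ i" by simp
  qed
qed

lemma shift_solution:
  assumes sol: "is_solution a x T2" and c: "0 \<le> c" and le: "c + T \<le> T2"
  shows "is_solution a (\<lambda>s. x (c + s)) T"
  unfolding is_solution_def
proof
  fix s assume s: "s \<in> {0..T}"
  have f: "((\<lambda>s. c + s) has_vector_derivative 1) (at s within {0..T})"
    by (auto intro!: derivative_eq_intros)
  have "(x has_vector_derivative field a (x (c + s))) (at (c + s) within {0..T2})"
    using sol s c le unfolding is_solution_def by auto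
  then have g: "(x has_vector_derivative field a (x (c + s))) (at ((\<lambda>s. c + s) s) within (\<lambda>s. c + s) ` {0..T})"
    by (rule has_vector_derivative_within_subset) (use c le in auto)
  from vector_diff_chain_within[OF f g]
  show "((\<lambda>s. x (c + s)) has_vector_derivative field a (x (c + s))) (at s within {0..T})"
    by (simp add: o_def)
qed

lemma restrict_solution:
  assumes sol: "is_solution a x T2" and le: "T \<le> T2"
  shows "is_solution a x T"
  unfolding is_solution_def
proof
  fix t assume t: "t \<in> {0..T}"
  then have "(x has_vector_derivative field a (x t)) (at t within {0..T2})"
    using sol le unfolding is_solution_def by auto
  then show "(x has_vector_derivative field a (x t)) (at t within {0..T})"
    by (rule has_vector_derivative_within_subset) (use le in auto)
qed

lemma part2:
  assumes e: "eps > 0" and f: "ffun (Ham a x0) T = eps"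
  shows "is_solution a x (real m * T) \<Longrightarrow> x 0 = x0 \<Longrightarrow>
      (\<forall>k<m. kahan_defined a eps ((kahan a eps ^^ k) x0)) \<Longrightarrow> (kahan a eps ^^ m) x0 = x (real m * T)"
proof (induction m arbitrary: x)
  case 0
  then show ?case by simp
next
  case (Suc m)
  have T: "T > 0" using ffun_facts[OF e f] by simp
  have sol1: "is_solution a x (real m * T)"
    using restrict_solution[OF Suc.prems(1)] T by simp
  have IH: "(kahan a eps ^^ m) x0 = x (real m * T)"
    using Suc.IH[OF sol1 Suc.prems(2)] Suc.prems(3) by simp
  have sol2: "is_solution a (\<lambda>s. x (real m * T + s)) T"
    by (rule shift_solution[OF Suc.prems(1)]) (use T in \<open>auto simp: algebra_simps\<close>)
  have "Ham a (x (real m * T)) = Ham a (x 0)"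
    by (rule Ham_const[OF Suc.prems(1)]) (use T in auto)
  then have f2: "ffun (Ham a (x (real m * T))) T = eps" using f Suc.prems(2) by simp
  have kd: "kahan_defined a eps (x (real m * T))" using Suc.prems(3) IH by auto
  have "(\<lambda>s. x (real m * T + s)) T = kahan a eps (x (real m * T))"
    by (rule part1[OF e f2 sol2 _ kd]) simp
  then show ?case using IH by (simp add: algebra_simps)
qed

theorem mainTheorem9:
  fixes a x0 :: "real^('n::{finite,linorder})" and eps teps :: real
  assumes "a \<noteq> 0" and "eps > 0" and "ffun (Ham a x0) teps = eps"
  shows "(\<forall>x. is_solution a x teps \<and> x 0 = x0 \<and> kahan_defined a eps x0
              \<longrightarrow> x teps = kahan a eps x0)
       \<and> (\<forall>(m::nat) x. is_solution a x (real m * teps) \<and> x 0 = x0 \<and>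
              (\<forall>k<m. kahan_defined a eps ((kahan a eps ^^ k) x0))
              \<longrightarrow> (kahan a eps ^^ m) x0 = x (real m * teps))
       \<and> (\<forall>(I :: real^('n::{finite,linorder}) \<Rightarrow> real) x. first_integral a I \<and> is_solution a x teps \<and> x 0 = x0
              \<and> kahan_defined a eps x0 \<longrightarrow> I (kahan a eps x0) = I x0)"
proof (intro conjI allI impI)
  have T: "teps > 0" using ffun_facts[OF assms(2,3)] by simp
  show "x teps = kahan a eps x0" if "is_solution a x teps \<and> x 0 = x0 \<and> kahan_defined a eps x0" for x
    using part1[OF assms(2,3)] that by blast
  show "(kahan a eps ^^ m) x0 = x (real m * teps)" if "is_solution a x (real m * teps) \<and> x 0 = x0 \<and>
              (\<forall>k<m. kahan_defined a eps ((kahan a eps ^^ k) x0))" for m x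
    using part2[OF assms(2,3)] that by blast
  show "I (kahan a eps x0) = I x0" if "first_integral a I \<and> is_solution a x teps \<and> x 0 = x0
              \<and> kahan_defined a eps x0" for I :: "real^('n::{finite,linorder}) \<Rightarrow> real" and x
  proof -
    have "I (x teps) = I (x 0)" using that T unfolding first_integral_def by auto
    moreover have "x teps = kahan a eps x0" using part1[OF assms(2,3)] that by blast
    ultimately show ?thesis using that by simp
  qed
qed

end
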